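(* For any $I\subseteq\{1,\dots,N\}$ and any $\nu\in(0,1)$, almost surely on the event $$E_\nu(I)=\Big\{\lim_{n\to\infty}v_n(i)\,n^\nu=0\quad\forall i\in I\Big\},$$ the set $I$ is visited by $(X_n)$ only finitely many times.
   Context: Let $N\ge2$, $E=\{1,\dots,N\}$, $\alpha>1$, and let $A=(A_{i,j})_{i,j\le N}$ be a symmetric matrix with nonnegative entries, $A_{i,j}>0$ for $i\ne j$, and $\sum_j A_{i,j}$ independent of $i$. Let $(X_n)_{n\ge0}$ be a process on $E$ with arbitrary initial state such that, with $\mathcal F_n=\sigma(X_k;k\le n)$ and $Z_n(j)=\sum_{\ell=0}^n\mathbf 1_{\{X_\ell=j\}}$, $\mathbb P(X_{n+1}=j\mid\mathcal F_n)=\dfrac{A_{X_n,j}(1+Z_n(j))^\alpha}{\sum_{k\le N}A_{X_n,k}(1+Z_n(k))^\alpha}$, and let $v_n(i)=Z_n(i)/(n+1)$. *)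

theory Defs
  imports "HOL-Probability.Probability"
begin

definition occ :: "(nat \<Rightarrow> 'w \<Rightarrow> nat) \<Rightarrow> nat \<Rightarrow> nat \<Rightarrow> 'w \<Rightarrow> nat" where
  "occ X n j \<omega> = card {l. l \<le> n \<and> X l \<omega> = j}"

definition emp :: "(nat \<Rightarrow> 'w \<Rightarrow> nat) \<Rightarrow> nat \<Rightarrow> nat \<Rightarrow> 'w \<Rightarrow> real" where
  "emp X n i \<omega> = real (occ X n i \<omega>) / real (n + 1)"

definition path_occ :: "(nat \<Rightarrow> nat) \<Rightarrow> nat \<Rightarrow> nat \<Rightarrow> nat" where
  "path_occ x n j = card {l. l \<le> n \<and> x l = j}"

definition vrrw_kernel ::
  "nat \<Rightarrow> (nat \<Rightarrow> nat \<Rightarrow> real) \<Rightarrow> real \<Rightarrow> (nat \<Rightarrow> nat) \<Rightarrow> nat \<Rightarrow> nat \<Rightarrow> real" where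
  "vrrw_kernel N A \<alpha> x n j =
     A (x n) j * (1 + real (path_occ x n j)) powr \<alpha> /
     (\<Sum>k\<in>{1..N}. A (x n) k * (1 + real (path_occ x n k)) powr \<alpha>)"

end

theory Submission
  imports Defs
begin


lemma path_occ_0: "path_occ x 0 j = (if x 0 = j then 1 else 0)"
proof -
  have "{l. l \<le> 0 \<and> x l = j} = (if x 0 = j then {0} else {})" by auto
  then show ?thesis unfolding path_occ_def by simp
qed

lemma path_occ_Suc: "path_occ x (Suc n) j = path_occ x n j + (if x (Suc n) = j then 1 else 0)"
proof -
  have "{l. l \<le> Suc n \<and> x l = j} = {l. l \<le> n \<and> x l = j} \<union> (if x (Suc n) = j then {Suc n} else {})"
    by (auto simp: le_Suc_eq)
  moreover have "finite {l. l \<le> n \<and> x l = j}" by auto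
  ultimately show ?thesis unfolding path_occ_def by (auto simp: card_insert_if)
qed

lemma path_occ_cong: "(\<forall>k\<le>n. x k = y k) \<Longrightarrow> path_occ x n j = path_occ y n j"
  unfolding path_occ_def by (metis (mono_tags, lifting) Collect_cong)

lemma path_occ_sum:
  assumes "\<forall>k\<le>n. x k \<in> {1..N}"
  shows "(\<Sum>j\<in>{1..N}. path_occ x n j) = Suc n"
  using assms
proof (induction n)
  case 0 then show ?case by (simp add: path_occ_0 sum.delta)
next
  case (Suc n)
  then show ?case by (simp add: path_occ_Suc sum.distrib sum.delta)
qed

lemma path_occ_noloop:
  assumes "\<forall>k<n. x (Suc k) = x k \<longrightarrow> x k \<noteq> v"
  shows "2 * path_occ x n v \<le> n + 1 + (if x n = v then 1 else 0)"
  using assms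
proof (induction n)
  case 0 then show ?case by (simp add: path_occ_0)
next
  case (Suc n)
  then have IH: "2 * path_occ x n v \<le> n + 1 + (if x n = v then 1 else 0)" by auto
  show ?case
  proof (cases "x (Suc n) = v")
    case True
    with Suc.prems have "x n \<noteq> v" by auto
    with IH True show ?thesis by (simp add: path_occ_Suc)
  next
    case False
    with IH show ?thesis by (simp add: path_occ_Suc split: if_splits)
  qed
qed



locale mat =
  fixes N :: nat and A :: "nat \<Rightarrow> nat \<Rightarrow> real" and \<alpha> :: real
  assumes N2: "N \<ge> 2" and alpha: "\<alpha> > 1"
    and nonneg: "\<And>i j. i \<in> {1..N} \<Longrightarrow> j \<in> {1..N} \<Longrightarrow> A i j \<ge> 0"
    and offdiag: "\<And>i j. i \<in> {1..N} \<Longrightarrow> j \<in> {1..N} \<Longrightarrow> i \<noteq> j \<Longrightarrow> A i j > 0"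
begin

definition "amin = Min {A i j | i j. i \<in> {1..N} \<and> j \<in> {1..N} \<and> A i j > 0}"
definition "amax = Max {A i j | i j. i \<in> {1..N} \<and> j \<in> {1..N}}"
definition "D x n = (\<Sum>k\<in>{1..N}. A (x n) k * (1 + real (path_occ x n k)) powr \<alpha>)"

lemma fin1: "finite {A i j | i j. i \<in> {1..N} \<and> j \<in> {1..N} \<and> A i j > 0}"
proof -
  have "{A i j | i j. i \<in> {1..N} \<and> j \<in> {1..N} \<and> A i j > 0} \<subseteq> (\<lambda>(i,j). A i j) ` ({1..N} \<times> {1..N})"
    by auto
  then show ?thesis by (rule finite_subset) auto
qed

lemma fin2: "finite {A i j | i j. i \<in> {1..N} \<and> j \<in> {1..N}}"
proof -
  have "{A i j | i j. i \<in> {1..N} \<and> j \<in> {1..N}} \<subseteq> (\<lambda>(i,j). A i j) ` ({1..N} \<times> {1..N})"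
    by auto
  then show ?thesis by (rule finite_subset) auto
qed

lemma amin_pos: "amin > 0"
proof -
  have "A 1 2 > 0" using offdiag[of 1 2] N2 by auto
  then have ne: "A 1 2 \<in> {A i j | i j. i \<in> {1..N} \<and> j \<in> {1..N} \<and> A i j > 0}" using N2 by force
  show ?thesis unfolding amin_def using fin1 ne
    by (subst Min_gr_iff) auto
qed

lemma amin_le: "i \<in> {1..N} \<Longrightarrow> j \<in> {1..N} \<Longrightarrow> A i j > 0 \<Longrightarrow> amin \<le> A i j"
  unfolding amin_def using fin1 by (intro Min_le) auto

lemma amax_ge: "i \<in> {1..N} \<Longrightarrow> j \<in> {1..N} \<Longrightarrow> A i j \<le> amax"
  unfolding amax_def using fin2 by (intro Max_ge) auto

lemma amax_nonneg: "amax \<ge> 0"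
  using amax_ge[of 1 1] nonneg[of 1 1] N2 by auto

lemma D_pos: assumes "x n \<in> {1..N}" shows "D x n > 0"
proof -
  define k :: nat where "k = (if x n = 1 then 2 else 1)"
  have k: "k \<in> {1..N}" "k \<noteq> x n" using N2 assms by (auto simp: k_def)
  have "0 < A (x n) k * (1 + real (path_occ x n k)) powr \<alpha>"
    using offdiag[OF assms k(1)] k by auto
  also have "\<dots> \<le> D x n" unfolding D_def
    using k assms nonneg by (intro member_le_sum) auto
  finally show ?thesis .
qed

lemma kernel_eq: "vrrw_kernel N A \<alpha> x n j = A (x n) j * (1 + real (path_occ x n j)) powr \<alpha> / D x n"
  unfolding vrrw_kernel_def D_def by simp

lemma kernel_nonneg: "x n \<in> {1..N} \<Longrightarrow> j \<in> {1..N} \<Longrightarrow> vrrw_kernel N A \<alpha> x n j \<ge> 0"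
  unfolding kernel_eq using D_pos[of x n] nonneg by auto

lemma kernel_sum: "x n \<in> {1..N} \<Longrightarrow> (\<Sum>j\<in>{1..N}. vrrw_kernel N A \<alpha> x n j) = 1"
  unfolding kernel_eq using D_pos[of x n]
  by (simp add: sum_divide_distrib[symmetric] D_def)

lemma D_lower:
  assumes xr: "\<forall>k\<le>n. x k \<in> {1..N}"
    and adm: "\<forall>k<n. x (Suc k) = x k \<longrightarrow> A (x k) (x k) \<noteq> 0"
    and n1: "n \<ge> 1"
  shows "D x n \<ge> amin * (real n / (2 * N)) powr \<alpha>"
proof -
  let ?v = "x n"
  have v: "?v \<in> {1..N}" using xr by auto
  have "\<exists>k\<in>{1..N}. A ?v k > 0 \<and> real (path_occ x n k) \<ge> real n / (2 * N)"
  proof (rule ccontr)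
    assume H: "\<not> ?thesis"
    have rest: "real (path_occ x n k) \<le> real n / (2 * N)" if "k \<in> {1..N} - {?v}" for k
      using H offdiag[OF v, of k] that by force
    have vv: "2 * real (path_occ x n ?v) \<le> real n + 2"
    proof (cases "A ?v ?v > 0")
      case True
      then have "real (path_occ x n ?v) < real n / (2 * N)" using H v by force
      also have "\<dots> \<le> real n / 2" using N2 by (intro divide_left_mono) auto
      finally show ?thesis by simp
    next
      case False
      then have "A ?v ?v = 0" using nonneg[OF v v] by auto
      then have "\<forall>k<n. x (Suc k) = x k \<longrightarrow> x k \<noteq> ?v" using adm by auto
      from path_occ_noloop[OF this] show ?thesis by simp
    qed
    have "real (Suc n) = real (\<Sum>j\<in>{1..N}. path_occ x n j)" using path_occ_sum[OF xr] by simp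
    also have "\<dots> = real (path_occ x n ?v) + (\<Sum>j\<in>{1..N} - {?v}. real (path_occ x n j))"
      using v by (simp add: sum.remove)
    also have "(\<Sum>j\<in>{1..N} - {?v}. real (path_occ x n j)) \<le> (\<Sum>j\<in>{1..N} - {?v}. real n / (2 * N))"
      by (intro sum_mono rest)
    also have "\<dots> = real (N - 1) * (real n / (2 * N))" using v by simp
    also have "\<dots> < real n / 2" using N2 n1 by (simp add: field_simps of_nat_diff)
    finally show False using vv by simp
  qed
  then obtain k where k: "k \<in> {1..N}" "A ?v k > 0" "real (path_occ x n k) \<ge> real n / (2 * N)" by blast
  have "amin * (real n / (2 * N)) powr \<alpha> \<le> A ?v k * (1 + real (path_occ x n k)) powr \<alpha>"
    using amin_pos k amin_le[OF v k(1) k(2)] alpha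
    by (intro mult_mono powr_mono2) auto
  also have "\<dots> \<le> D x n" unfolding D_def
    using k v nonneg by (intro member_le_sum) auto
  finally show ?thesis .
qed

end


context mat begin

definition "Cst = amax * 3 powr (\<alpha> - 1) * (2 * N) powr \<alpha> / amin"

lemma Cst_nonneg: "Cst \<ge> 0"
  unfolding Cst_def using amax_nonneg amin_pos by auto

lemma kernel_I_bound:
  assumes xr: "\<forall>k\<le>n. x k \<in> {1..N}"
    and adm: "\<forall>k<n. x (Suc k) = x k \<longrightarrow> A (x k) (x k) \<noteq> 0"
    and n1: "n \<ge> 1" and I: "I \<subseteq> {1..N}" and nu: "0 < \<nu>" "\<nu> < 1"
    and occb: "\<forall>i\<in>I. real (path_occ x n i) \<le> 2 * real n powr (1 - \<nu>)"
  shows "(\<Sum>j\<in>I. vrrw_kernel N A \<alpha> x n j)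
         \<le> Cst * real n powr (-(1 + \<nu> * (\<alpha> - 1))) * (\<Sum>j\<in>I. 1 + real (path_occ x n j))"
proof -
  let ?v = "x n"
  have v: "?v \<in> {1..N}" using xr by auto
  define P where "P = real n powr (1 - \<nu>)"
  have P1: "P \<ge> 1" unfolding P_def using n1 nu by (intro ge_one_powr_ge_zero) auto
  define w where "w = (\<Sum>j\<in>I. 1 + real (path_occ x n j))"
  have finI: "finite I" using I finite_subset by blast
  have trm: "A ?v j * (1 + real (path_occ x n j)) powr \<alpha>
      \<le> amax * (3 * P) powr (\<alpha> - 1) * (1 + real (path_occ x n j))" if j: "j \<in> I" for j
  proof -
    let ?z = "1 + real (path_occ x n j)"
    have z0: "?z > 0" by simp
    have "?z powr \<alpha> = ?z powr (1 + (\<alpha> - 1))" by simp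
    also have "\<dots> = ?z * ?z powr (\<alpha> - 1)" by (subst powr_add) simp
    finally have eq: "?z powr \<alpha> = ?z * ?z powr (\<alpha> - 1)" .
    have "?z \<le> 3 * P" using occb j P1 unfolding P_def by auto
    then have "?z powr (\<alpha> - 1) \<le> (3 * P) powr (\<alpha> - 1)" using alpha by (intro powr_mono2) auto
    moreover have "A ?v j \<le> amax" using amax_ge v j I by auto
    moreover have "A ?v j \<ge> 0" using nonneg v j I by auto
    ultimately show ?thesis unfolding eq
      by (smt (verit) mult_mono mult_nonneg_nonneg powr_ge_zero z0 mult.commute mult.assoc)
  qed
  have num: "(\<Sum>j\<in>I. A ?v j * (1 + real (path_occ x n j)) powr \<alpha>) \<le> amax * (3 * P) powr (\<alpha> - 1) * w"
    unfolding w_def sum_distrib_left by (intro sum_mono trm)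
  have num0: "0 \<le> (\<Sum>j\<in>I. A ?v j * (1 + real (path_occ x n j)) powr \<alpha>)"
    using nonneg v I by (intro sum_nonneg) auto
  have Dl: "D x n \<ge> amin * (real n / (2 * N)) powr \<alpha>" by (rule D_lower[OF xr adm n1])
  have dpos: "amin * (real n / (2 * N)) powr \<alpha> > 0" using amin_pos n1 N2 by auto
  have "(\<Sum>j\<in>I. vrrw_kernel N A \<alpha> x n j) = (\<Sum>j\<in>I. A ?v j * (1 + real (path_occ x n j)) powr \<alpha>) / D x n"
    unfolding kernel_eq by (simp add: sum_divide_distrib)
  also have "\<dots> \<le> (\<Sum>j\<in>I. A ?v j * (1 + real (path_occ x n j)) powr \<alpha>) / (amin * (real n / (2 * N)) powr \<alpha>)"
    using num0 Dl dpos by (intro divide_left_mono) auto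
  also have "\<dots> \<le> amax * (3 * P) powr (\<alpha> - 1) * w / (amin * (real n / (2 * N)) powr \<alpha>)"
    using num dpos by (intro divide_right_mono) auto
  also have "\<dots> = Cst * real n powr (-(1 + \<nu> * (\<alpha> - 1))) * w"
  proof -
    have n0: "real n > 0" using n1 by auto
    have a: "(3 * P) powr (\<alpha> - 1) = 3 powr (\<alpha> - 1) * real n powr ((1 - \<nu>) * (\<alpha> - 1))"
      unfolding P_def by (simp add: powr_mult powr_powr)
    have b: "(real n / (2 * N)) powr \<alpha> = real n powr \<alpha> / (2 * N) powr \<alpha>"
      using n0 by (simp add: powr_divide)
    have c: "real n powr ((1 - \<nu>) * (\<alpha> - 1)) / real n powr \<alpha> = real n powr (-(1 + \<nu> * (\<alpha> - 1)))"
      using n0 by (simp add: powr_diff[symmetric] algebra_simps)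
    have N0: "(2 * real N) powr \<alpha> > 0" using N2 by auto
    show ?thesis unfolding a b Cst_def using c[symmetric] amin_pos N0 n0
      by (simp add: field_simps)
  qed
  finally show ?thesis unfolding w_def .
qed

end


locale vrrw = mat N A \<alpha> + prob_space M
  for N A \<alpha> and M :: "'w measure" +
  fixes X :: "nat \<Rightarrow> 'w \<Rightarrow> nat"
  assumes Xmeas: "\<And>n. X n \<in> measurable M (count_space UNIV)"
    and Xrange: "\<And>n \<omega>. \<omega> \<in> space M \<Longrightarrow> X n \<omega> \<in> {1..N}"
    and kern: "\<And>n (x :: nat \<Rightarrow> nat) j. (\<forall>k\<le>n. x k \<in> {1..N}) \<Longrightarrow> j \<in> {1..N} \<Longrightarrow>
           measure M {\<omega> \<in> space M. (\<forall>k\<le>n. X k \<omega> = x k) \<and> X (Suc n) \<omega> = j}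
         = measure M {\<omega> \<in> space M. \<forall>k\<le>n. X k \<omega> = x k} * vrrw_kernel N A \<alpha> x n j"
begin

definition "cyl x n = {\<omega> \<in> space M. \<forall>k\<le>n. X k \<omega> = x k}"
definition "p x n = measure M (cyl x n)"
definition paths :: "nat \<Rightarrow> (nat \<Rightarrow> nat) set" where "paths n = Pi\<^sub>E {..n} (\<lambda>_. {1..N})"

lemma cyl_sets: "cyl x n \<in> sets M"
proof -
  have "cyl x n = (\<Inter>k\<in>{..n}. space M \<inter> X k -` {x k})" unfolding cyl_def by auto
  also have "\<dots> \<in> sets M"
    using measurable_sets[OF Xmeas] by (intro sets.finite_INT) (auto simp: Int_commute)
  finally show ?thesis .
qed

lemma finite_paths: "finite (paths n)"
  unfolding paths_def by (intro finite_PiE) auto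

lemma event_sum:
  assumes dep: "\<And>x y. (\<forall>k\<le>n. x k = y k) \<Longrightarrow> P x \<longleftrightarrow> P y"
  shows "{\<omega> \<in> space M. P (\<lambda>k. X k \<omega>)} \<in> sets M"
    and "measure M {\<omega> \<in> space M. P (\<lambda>k. X k \<omega>)} = (\<Sum>x\<in>paths n \<inter> {x. P x}. p x n)"
proof -
  have eq: "{\<omega> \<in> space M. P (\<lambda>k. X k \<omega>)} = (\<Union>x\<in>paths n \<inter> {x. P x}. cyl x n)"
  proof (intro equalityI subsetI)
    fix \<omega> assume w: "\<omega> \<in> {\<omega> \<in> space M. P (\<lambda>k. X k \<omega>)}"
    define x where "x = restrict (\<lambda>k. X k \<omega>) {..n}"
    have "x \<in> paths n" using w Xrange unfolding x_def paths_def by auto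
    moreover have "P x" using w dep[of x "\<lambda>k. X k \<omega>"] unfolding x_def by auto
    moreover have "\<omega> \<in> cyl x n" using w unfolding cyl_def x_def by auto
    ultimately show "\<omega> \<in> (\<Union>x\<in>paths n \<inter> {x. P x}. cyl x n)" by blast
  next
    fix \<omega> assume "\<omega> \<in> (\<Union>x\<in>paths n \<inter> {x. P x}. cyl x n)"
    then obtain x where x: "P x" "\<omega> \<in> cyl x n" by auto
    then show "\<omega> \<in> {\<omega> \<in> space M. P (\<lambda>k. X k \<omega>)}"
      using dep[of x "\<lambda>k. X k \<omega>"] unfolding cyl_def by auto
  qed
  have disj: "disjoint_family_on (\<lambda>x. cyl x n) (paths n \<inter> {x. P x})"
    unfolding disjoint_family_on_def
  proof (intro ballI impI)
    fix x y assume xy: "x \<in> paths n \<inter> {x. P x}" "y \<in> paths n \<inter> {x. P x}" "x \<noteq> y"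
    show "cyl x n \<inter> cyl y n = {}"
    proof (rule ccontr)
      assume "cyl x n \<inter> cyl y n \<noteq> {}"
      then obtain \<omega> where "\<omega> \<in> cyl x n" "\<omega> \<in> cyl y n" by auto
      then have "\<forall>k\<le>n. x k = y k" unfolding cyl_def by auto
      then have "x = y" using xy(1,2) unfolding paths_def
        by (intro PiE_ext[of x "{..n}" _ y]) auto
      with xy(3) show False by simp
    qed
  qed
  show "{\<omega> \<in> space M. P (\<lambda>k. X k \<omega>)} \<in> sets M"
    unfolding eq using finite_paths cyl_sets by (intro sets.finite_UN) auto
  show "measure M {\<omega> \<in> space M. P (\<lambda>k. X k \<omega>)} = (\<Sum>x\<in>paths n \<inter> {x. P x}. p x n)"
    unfolding eq p_def using finite_paths cyl_sets disj
    by (intro finite_measure_finite_Union) auto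
qed

lemma p_nonneg: "p x n \<ge> 0" unfolding p_def by simp

lemma kernel_cong: "(\<forall>k\<le>n. x k = y k) \<Longrightarrow> vrrw_kernel N A \<alpha> x n j = vrrw_kernel N A \<alpha> y n j"
  unfolding vrrw_kernel_def using path_occ_cong[of n x y] by simp

lemma cyl_Suc: "{\<omega> \<in> space M. (\<forall>k\<le>n. X k \<omega> = x k) \<and> X (Suc n) \<omega> = x (Suc n)} = cyl x (Suc n)"
  unfolding cyl_def by (auto simp: le_Suc_eq)

lemma p_Suc: "\<forall>k\<le>n. x k \<in> {1..N} \<Longrightarrow> x (Suc n) \<in> {1..N} \<Longrightarrow> p x (Suc n) = p x n * vrrw_kernel N A \<alpha> x n (x (Suc n))"
  using kern[of n x "x (Suc n)"] unfolding p_def cyl_Suc by (simp add: cyl_def)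

lemma p_step:
  assumes "x \<in> paths n" "j \<in> {1..N}"
  shows "p (x(Suc n := j)) (Suc n) = p x n * vrrw_kernel N A \<alpha> x n j"
proof -
  have r: "\<forall>k\<le>n. x k \<in> {1..N}" using assms unfolding paths_def by auto
  have "p (x(Suc n := j)) (Suc n) = p (x(Suc n := j)) n * vrrw_kernel N A \<alpha> (x(Suc n := j)) n j"
    using p_Suc[of n "x(Suc n := j)"] r assms by auto
  moreover have "p (x(Suc n := j)) n = p x n" unfolding p_def cyl_def by auto
  moreover have "vrrw_kernel N A \<alpha> (x(Suc n := j)) n j = vrrw_kernel N A \<alpha> x n j"
    by (intro kernel_cong) auto
  ultimately show ?thesis by simp
qed

lemma p_mono: assumes "n \<le> n'" shows "p x n' \<le> p x n"
proof -
  have "cyl x n' \<subseteq> cyl x n" unfolding cyl_def using assms le_trans by blast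
  then show ?thesis unfolding p_def by (rule finite_measure_mono[OF _ cyl_sets])
qed

lemma p_adm:
  assumes r: "\<forall>k\<le>n. x k \<in> {1..N}" and pos: "p x n > 0"
  shows "\<forall>k<n. x (Suc k) = x k \<longrightarrow> A (x k) (x k) \<noteq> 0"
proof (intro allI impI notI)
  fix k assume k: "k < n" "x (Suc k) = x k" "A (x k) (x k) = 0"
  have "p x (Suc k) = p x k * vrrw_kernel N A \<alpha> x k (x (Suc k))"
    using r k by (intro p_Suc) auto
  also have "vrrw_kernel N A \<alpha> x k (x (Suc k)) = 0" using k unfolding vrrw_kernel_def by simp
  finally have "p x (Suc k) = 0" by simp
  moreover have "p x n \<le> p x (Suc k)" using k by (intro p_mono) auto
  ultimately show False using pos by simp
qed

lemma sum_paths_Suc: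
  "(\<Sum>x'\<in>paths (Suc n). f x') = (\<Sum>x\<in>paths n. \<Sum>j\<in>{1..N}. f (x(Suc n := j)))"
proof -
  have e: "paths (Suc n) = (\<lambda>(y, g). g(Suc n := y)) ` ({1..N} \<times> paths n)"
    unfolding paths_def by (simp add: atMost_Suc PiE_insert_eq)
  have i: "inj_on (\<lambda>(y, g). g(Suc n := y)) ({1..N} \<times> paths n)"
    unfolding paths_def by (rule inj_combinator) auto
  have "(\<Sum>x'\<in>paths (Suc n). f x') = (\<Sum>(y,g)\<in>{1..N} \<times> paths n. f (g(Suc n := y)))"
    unfolding e by (subst sum.reindex[OF i]) (simp add: case_prod_unfold)
  also have "\<dots> = (\<Sum>y\<in>{1..N}. \<Sum>g\<in>paths n. f (g(Suc n := y)))"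
    by (subst sum.cartesian_product) simp
  also have "\<dots> = (\<Sum>x\<in>paths n. \<Sum>j\<in>{1..N}. f (x(Suc n := j)))"
    by (rule sum.swap)
  finally show ?thesis .
qed

end


locale vrrwI = vrrw N A \<alpha> M X for N A \<alpha> and M :: "'w measure" and X +
  fixes I :: "nat set" and \<nu> :: real and m :: nat
  assumes I: "I \<subseteq> {1..N}" and nu: "0 < \<nu>" "\<nu> < 1" and m1: "m \<ge> 1"
begin

definition "good x n = (\<forall>k. m \<le> k \<and> k \<le> n \<longrightarrow> (\<forall>i\<in>I. real (path_occ x k i) \<le> 2 * real k powr (1 - \<nu>)))"
definition "wt x n = (\<Sum>i\<in>I. 1 + real (path_occ x n i))"
definition "E n = (\<Sum>x\<in>paths n. if good x n then p x n * wt x n else 0)"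
definition "r n = Cst * real n powr (-(1 + \<nu> * (\<alpha> - 1)))"

lemma finI: "finite I" using I finite_subset by blast

lemma wt_nonneg: "wt x n \<ge> 0" unfolding wt_def by (intro sum_nonneg) auto

lemma good_cong: "(\<forall>k\<le>n. x k = y k) \<Longrightarrow> good x n = good y n"
  unfolding good_def
proof (intro iffI allI impI)
  fix k assume "\<forall>k\<le>n. x k = y k" "m \<le> k \<and> k \<le> n"
  then have "path_occ x k i = path_occ y k i" for i by (intro path_occ_cong) auto
  moreover assume "\<forall>k. m \<le> k \<and> k \<le> n \<longrightarrow> (\<forall>i\<in>I. real (path_occ x k i) \<le> 2 * real k powr (1 - \<nu>))"
  ultimately show "\<forall>i\<in>I. real (path_occ y k i) \<le> 2 * real k powr (1 - \<nu>)"
    using \<open>m \<le> k \<and> k \<le> n\<close> by auto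
next
  fix k assume "\<forall>k\<le>n. x k = y k" "m \<le> k \<and> k \<le> n"
  then have "path_occ x k i = path_occ y k i" for i by (intro path_occ_cong) auto
  moreover assume "\<forall>k. m \<le> k \<and> k \<le> n \<longrightarrow> (\<forall>i\<in>I. real (path_occ y k i) \<le> 2 * real k powr (1 - \<nu>))"
  ultimately show "\<forall>i\<in>I. real (path_occ x k i) \<le> 2 * real k powr (1 - \<nu>)"
    using \<open>m \<le> k \<and> k \<le> n\<close> by auto
qed

lemma wt_cong: "(\<forall>k\<le>n. x k = y k) \<Longrightarrow> wt x n = wt y n"
  unfolding wt_def using path_occ_cong[of n x y] by simp

lemma wt_step: "wt (x(Suc n := j)) (Suc n) = wt x n + (if j \<in> I then 1 else 0)"
proof -
  have "path_occ (x(Suc n := j)) (Suc n) i = path_occ x n i + (if j = i then 1 else 0)" for i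
    by (simp add: path_occ_Suc path_occ_cong[of n "x(Suc n := j)" x])
  then have "wt (x(Suc n := j)) (Suc n) = (\<Sum>i\<in>I. (1 + real (path_occ x n i)) + (if j = i then 1 else 0))"
    unfolding wt_def by (intro sum.cong) auto
  also have "\<dots> = wt x n + (if j \<in> I then 1 else 0)"
    unfolding wt_def sum.distrib using finI by (simp add: sum.delta)
  finally show ?thesis .
qed

lemma good_step: "good (x(Suc n := j)) (Suc n) \<Longrightarrow> good x n"
proof -
  assume "good (x(Suc n := j)) (Suc n)"
  then have "good (x(Suc n := j)) n" unfolding good_def by auto
  moreover have "good (x(Suc n := j)) n = good x n" by (intro good_cong) auto
  ultimately show ?thesis by simp
qed

lemma inner:
  assumes x: "x \<in> paths n" and mn: "m \<le> n"
  shows "(\<Sum>j\<in>{1..N}. (\<lambda>x'. if good x' (Suc n) then p x' (Suc n) * wt x' (Suc n) else 0) (x(Suc n := j)))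
     \<le> (1 + r n) * (if good x n then p x n * wt x n else 0)"
proof (cases "good x n")
  case False
  then have "good (x(Suc n := j)) (Suc n) = False" for j using good_step by blast
  then show ?thesis using False by simp
next
  case True
  have xr: "\<forall>k\<le>n. x k \<in> {1..N}" using x unfolding paths_def by auto
  have xn: "x n \<in> {1..N}" using xr by auto
  let ?K = "\<lambda>j. vrrw_kernel N A \<alpha> x n j"
  have "(\<Sum>j\<in>{1..N}. (\<lambda>x'. if good x' (Suc n) then p x' (Suc n) * wt x' (Suc n) else 0) (x(Suc n := j)))
      \<le> (\<Sum>j\<in>{1..N}. p x n * ?K j * (wt x n + (if j \<in> I then 1 else 0)))"
  proof (intro sum_mono)
    fix j assume j: "j \<in> {1..N}"
    have k0: "?K j \<ge> 0" using kernel_nonneg[of x n j] xn j by simp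
    show "(\<lambda>x'. if good x' (Suc n) then p x' (Suc n) * wt x' (Suc n) else 0) (x(Suc n := j))
        \<le> p x n * ?K j * (wt x n + (if j \<in> I then 1 else 0))"
      using p_step[OF x j] wt_step[of x n j] k0 p_nonneg[of x n] wt_nonneg[of x n] by auto
  qed
  also have "\<dots> = (\<Sum>j\<in>{1..N}. p x n * wt x n * ?K j + p x n * (if j \<in> I then ?K j else 0))"
    by (intro sum.cong) (auto simp: algebra_simps)
  also have "\<dots> = p x n * (wt x n * (\<Sum>j\<in>{1..N}. ?K j) + (\<Sum>j\<in>{1..N}. if j \<in> I then ?K j else 0))"
    by (simp add: sum.distrib sum_distrib_left[symmetric] algebra_simps)
  also have "(\<Sum>j\<in>{1..N}. if j \<in> I then ?K j else 0) = (\<Sum>j\<in>I. ?K j)"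
  proof -
    have "I \<inter> {1..N} = I" using I by auto
    then show ?thesis by (simp add: sum.inter_restrict[symmetric] Int_commute)
  qed
  also have "(\<Sum>j\<in>{1..N}. ?K j) = 1" using kernel_sum[of x n] xn by simp
  also have "p x n * (wt x n * 1 + (\<Sum>j\<in>I. ?K j)) \<le> p x n * (wt x n + r n * wt x n)"
  proof (cases "p x n = 0")
    case True then show ?thesis by simp
  next
    case False
    then have pos: "p x n > 0" using p_nonneg[of x n] by auto
    have adm: "\<forall>k<n. x (Suc k) = x k \<longrightarrow> A (x k) (x k) \<noteq> 0" by (rule p_adm[OF xr pos])
    have occb: "\<forall>i\<in>I. real (path_occ x n i) \<le> 2 * real n powr (1 - \<nu>)"
      using True mn unfolding good_def by auto
    have "(\<Sum>j\<in>I. ?K j) \<le> r n * wt x n"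
      unfolding r_def wt_def using kernel_I_bound[OF xr adm _ I nu occb] mn m1 by simp
    then show ?thesis using pos by (intro mult_left_mono) auto
  qed
  also have "\<dots> = (1 + r n) * (if good x n then p x n * wt x n else 0)"
    using True by (simp add: algebra_simps)
  finally show ?thesis .
qed

lemma E_Suc: "m \<le> n \<Longrightarrow> E (Suc n) \<le> (1 + r n) * E n"
proof -
  assume mn: "m \<le> n"
  have "E (Suc n) = (\<Sum>x\<in>paths n. \<Sum>j\<in>{1..N}.
      (\<lambda>x'. if good x' (Suc n) then p x' (Suc n) * wt x' (Suc n) else 0) (x(Suc n := j)))"
    unfolding E_def by (rule sum_paths_Suc)
  also have "\<dots> \<le> (\<Sum>x\<in>paths n. (1 + r n) * (if good x n then p x n * wt x n else 0))"
    by (intro sum_mono inner mn)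
  also have "\<dots> = (1 + r n) * E n" unfolding E_def by (simp add: sum_distrib_left)
  finally show ?thesis .
qed

end


lemma path_occ_mono: "n \<le> n' \<Longrightarrow> path_occ x n i \<le> path_occ x n' i"
  unfolding path_occ_def by (intro card_mono) auto

lemma path_occ_le: "path_occ x n i \<le> Suc n"
proof -
  have "path_occ x n i \<le> card {..n}" unfolding path_occ_def by (intro card_mono) auto
  then show ?thesis by simp
qed

context vrrwI begin

lemma r_nonneg: "r n \<ge> 0" unfolding r_def using Cst_nonneg by simp

lemma r_summable: "summable r"
proof -
  have "summable (\<lambda>n. real n powr (-(1 + \<nu> * (\<alpha> - 1))))"
    using nu alpha by (subst summable_real_powr_iff) (auto intro!: mult_pos_pos)
  then show ?thesis unfolding r_def by (rule summable_mult)
qed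

lemma E_nonneg: "E n \<ge> 0"
  unfolding E_def using p_nonneg wt_nonneg by (intro sum_nonneg) auto

lemma E_grow: "m \<le> n \<Longrightarrow> E n \<le> E m * exp (\<Sum>k\<in>{m..<n}. r k)"
proof (induction n rule: dec_induct)
  case base then show ?case by simp
next
  case (step n)
  have "E (Suc n) \<le> (1 + r n) * E n" using E_Suc step by simp
  also have "\<dots> \<le> exp (r n) * (E m * exp (\<Sum>k\<in>{m..<n}. r k))"
    using step.IH E_nonneg[of n] r_nonneg[of n]
    by (intro mult_mono) auto
  also have "\<dots> = E m * exp (\<Sum>k\<in>{m..<Suc n}. r k)"
    using step by (simp add: exp_add[symmetric] algebra_simps)
  finally show ?case .
qed

lemma sum_p_le1: "(\<Sum>x\<in>paths n. p x n) \<le> 1"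
proof -
  have "(\<Sum>x\<in>paths n. p x n) = (\<Sum>x\<in>paths n \<inter> {x. True}. p x n)" by simp
  also have "\<dots> = measure M {\<omega> \<in> space M. True}"
    by (rule event_sum(2)[symmetric]) simp
  also have "\<dots> \<le> 1" by simp
  finally show ?thesis .
qed

lemma wt_le: "wt x n \<le> real N * (real n + 2)"
proof -
  have "wt x n \<le> (\<Sum>i\<in>I. real n + 2)" unfolding wt_def
  proof (intro sum_mono)
    fix i have "real (path_occ x n i) \<le> real (Suc n)" using path_occ_le[of x n i] by (simp only: of_nat_le_iff)
    then show "1 + real (path_occ x n i) \<le> real n + 2" by simp
  qed
  also have "\<dots> = real (card I) * (real n + 2)" by simp
  also have "\<dots> \<le> real N * (real n + 2)"
    using card_mono[OF _ I] by (intro mult_right_mono) auto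
  finally show ?thesis .
qed

definition "Bnd = real N * (real m + 2) * exp (suminf r)"

lemma E_m: "E m \<le> real N * (real m + 2)"
proof -
  have "E m \<le> (\<Sum>x\<in>paths m. p x m * (real N * (real m + 2)))"
    unfolding E_def using p_nonneg wt_le wt_nonneg
    by (intro sum_mono) (auto intro: mult_left_mono)
  also have "\<dots> = (\<Sum>x\<in>paths m. p x m) * (real N * (real m + 2))"
    by (simp add: sum_distrib_right)
  also have "\<dots> \<le> real N * (real m + 2)"
    using sum_p_le1[of m] p_nonneg by (intro mult_left_le_one_le sum_nonneg) auto
  finally show ?thesis .
qed

lemma E_bound: "m \<le> n \<Longrightarrow> E n \<le> Bnd"
proof -
  assume mn: "m \<le> n"
  have "E n \<le> E m * exp (\<Sum>k\<in>{m..<n}. r k)" by (rule E_grow[OF mn])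
  also have "\<dots> \<le> real N * (real m + 2) * exp (suminf r)"
    using E_m E_nonneg[of m] r_nonneg r_summable
    by (intro mult_mono) (auto intro!: sum_le_suminf)
  finally show ?thesis unfolding Bnd_def .
qed

end


context vrrwI begin

lemma pred_good: "Measurable.pred M (\<lambda>\<omega>. good (\<lambda>k. X k \<omega>) n)"
  unfolding pred_def by (rule event_sum(1)[of n]) (rule good_cong)

lemma pred_wt: "Measurable.pred M (\<lambda>\<omega>. K \<le> wt (\<lambda>k. X k \<omega>) n)"
  unfolding pred_def by (rule event_sum(1)[of n]) (metis wt_cong)

lemma tail_bound:
  assumes mn: "m \<le> n" and K: "K > 0"
  shows "measure M {\<omega> \<in> space M. good (\<lambda>k. X k \<omega>) n \<and> K \<le> wt (\<lambda>k. X k \<omega>) n} \<le> Bnd / K"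
proof -
  let ?Q = "{x. good x n \<and> K \<le> wt x n}"
  let ?f = "\<lambda>x. if good x n then p x n * wt x n else 0"
  have "measure M {\<omega> \<in> space M. good (\<lambda>k. X k \<omega>) n \<and> K \<le> wt (\<lambda>k. X k \<omega>) n}
      = (\<Sum>x\<in>paths n \<inter> ?Q. p x n)"
    by (rule event_sum(2)) (metis good_cong wt_cong)
  also have "\<dots> \<le> (\<Sum>x\<in>paths n \<inter> ?Q. ?f x / K)"
  proof (intro sum_mono)
    fix x assume "x \<in> paths n \<inter> ?Q"
    then have g: "good x n" "K \<le> wt x n" by auto
    have "p x n * K \<le> p x n * wt x n" using g p_nonneg by (intro mult_left_mono) auto
    then show "p x n \<le> ?f x / K" using g K by (simp add: field_simps)
  qed
  also have "\<dots> \<le> (\<Sum>x\<in>paths n. ?f x / K)"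
    using finite_paths K p_nonneg wt_nonneg by (intro sum_mono2) auto
  also have "\<dots> = E n / K" unfolding E_def by (simp add: sum_divide_distrib)
  also have "\<dots> \<le> Bnd / K" using E_bound[OF mn] K by (intro divide_right_mono) auto
  finally show ?thesis .
qed

lemma wt_mono: "n \<le> n' \<Longrightarrow> wt x n \<le> wt x n'"
  unfolding wt_def using path_occ_mono[of n n' x] by (intro sum_mono) auto

lemma Bnd_nonneg: "Bnd \<ge> 0" unfolding Bnd_def by simp

definition "Zs = {\<omega> \<in> space M. (\<forall>n. good (\<lambda>k. X k \<omega>) n) \<and> (\<forall>k::nat. \<exists>n. real (Suc k) \<le> wt (\<lambda>k. X k \<omega>) n)}"

lemma Zs_sets: "Zs \<in> sets M"
proof -
  have "Measurable.pred M (\<lambda>\<omega>. (\<forall>n. good (\<lambda>k. X k \<omega>) n) \<and> (\<forall>k::nat. \<exists>n. real (Suc k) \<le> wt (\<lambda>k. X k \<omega>) n))"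
    using pred_good pred_wt by (intro pred_intros_logic pred_intros_countable) auto
  then show ?thesis unfolding pred_def Zs_def .
qed

lemma Zs_bound: "measure M Zs \<le> Bnd / real (Suc k)"
proof -
  let ?K = "real (Suc k)"
  define F where "F i = {\<omega> \<in> space M. (\<forall>n. good (\<lambda>k. X k \<omega>) n) \<and> ?K \<le> wt (\<lambda>k. X k \<omega>) (i + m)}" for i
  have Fs: "F i \<in> sets M" for i
  proof -
    have "Measurable.pred M (\<lambda>\<omega>. (\<forall>n. good (\<lambda>k. X k \<omega>) n) \<and> ?K \<le> wt (\<lambda>k. X k \<omega>) (i + m))"
      using pred_good pred_wt by (intro pred_intros_logic pred_intros_countable) auto
    then show ?thesis unfolding pred_def F_def .
  qed
  have inc: "incseq F"
    unfolding incseq_def F_def using wt_mono order_trans by (auto intro: order_trans)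
  have sub: "Zs \<subseteq> (\<Union>i. F i)"
  proof
    fix \<omega> assume w: "\<omega> \<in> Zs"
    then obtain n where n: "?K \<le> wt (\<lambda>k. X k \<omega>) n" unfolding Zs_def by blast
    have "wt (\<lambda>k. X k \<omega>) n \<le> wt (\<lambda>k. X k \<omega>) (n + m)" by (rule wt_mono) simp
    with n w have "\<omega> \<in> F n" unfolding F_def Zs_def by auto
    then show "\<omega> \<in> (\<Union>i. F i)" by blast
  qed
  have Fb: "measure M (F i) \<le> Bnd / ?K" for i
  proof -
    have "F i \<subseteq> {\<omega> \<in> space M. good (\<lambda>k. X k \<omega>) (i + m) \<and> ?K \<le> wt (\<lambda>k. X k \<omega>) (i + m)}"
      unfolding F_def by auto
    then have "measure M (F i) \<le> measure M {\<omega> \<in> space M. good (\<lambda>k. X k \<omega>) (i + m) \<and> ?K \<le> wt (\<lambda>k. X k \<omega>) (i + m)}"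
      using pred_good pred_wt
      by (intro finite_measure_mono) (auto simp: pred_def intro!: pred_intros_logic)
    also have "\<dots> \<le> Bnd / ?K" by (rule tail_bound) auto
    finally show ?thesis .
  qed
  have lim: "(\<lambda>i. measure M (F i)) \<longlonglongrightarrow> measure M (\<Union>i. F i)"
    using Fs inc by (intro finite_Lim_measure_incseq) auto
  have "measure M (\<Union>i. F i) \<le> Bnd / ?K"
    by (rule LIMSEQ_le_const2[OF lim]) (use Fb in auto)
  moreover have "measure M Zs \<le> measure M (\<Union>i. F i)"
    using sub Fs by (intro finite_measure_mono) auto
  ultimately show ?thesis by linarith
qed

lemma Zs_null: "Zs \<in> null_sets M"
proof -
  have "measure M Zs = 0"
  proof (rule ccontr)
    assume "measure M Zs \<noteq> 0"
    then have mu: "measure M Zs > 0" by (simp add: order_neq_le_trans)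
    obtain k :: nat where k: "Bnd / measure M Zs < real k" using reals_Archimedean2 by blast
    have "Bnd < real k * measure M Zs" using k mu by (simp add: field_simps)
    also have "\<dots> < real (Suc k) * measure M Zs" using mu by simp
    finally have "Bnd / real (Suc k) < measure M Zs" by (simp add: field_simps)
    with Zs_bound[of k] show False by simp
  qed
  then show ?thesis using Zs_sets by (intro null_setsI) (simp add: emeasure_eq_measure)
qed

end


context vrrwI begin
lemma null_final:
  "{\<omega> \<in> space M. (\<forall>n k. m \<le> k \<and> k \<le> n \<longrightarrow> (\<forall>i\<in>I. real (path_occ (\<lambda>k. X k \<omega>) k i) \<le> 2 * real k powr (1 - \<nu>)))
     \<and> (\<forall>k::nat. \<exists>n. real (Suc k) \<le> (\<Sum>i\<in>I. 1 + real (path_occ (\<lambda>k. X k \<omega>) n i)))} \<in> null_sets M"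
  using Zs_null unfolding Zs_def good_def wt_def .
end

theorem lemma3p14:
  fixes M :: "'w measure" and X :: "nat \<Rightarrow> 'w \<Rightarrow> nat"
    and N :: nat and A :: "nat \<Rightarrow> nat \<Rightarrow> real" and \<alpha> \<nu> :: real and I :: "nat set"
  assumes "prob_space M"
    and "N \<ge> 2" and "\<alpha> > 1"
    and "\<And>i j. i \<in> {1..N} \<Longrightarrow> j \<in> {1..N} \<Longrightarrow> A i j = A j i"
    and "\<And>i j. i \<in> {1..N} \<Longrightarrow> j \<in> {1..N} \<Longrightarrow> A i j \<ge> 0"
    and "\<And>i j. i \<in> {1..N} \<Longrightarrow> j \<in> {1..N} \<Longrightarrow> i \<noteq> j \<Longrightarrow> A i j > 0"
    and "\<And>i i'. i \<in> {1..N} \<Longrightarrow> i' \<in> {1..N} \<Longrightarrow>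
           (\<Sum>j\<in>{1..N}. A i j) = (\<Sum>j\<in>{1..N}. A i' j)"
    and "\<And>n. X n \<in> measurable M (count_space UNIV)"
    and "\<And>n \<omega>. \<omega> \<in> space M \<Longrightarrow> X n \<omega> \<in> {1..N}"
    and "\<And>n (x :: nat \<Rightarrow> nat) j. (\<forall>k\<le>n. x k \<in> {1..N}) \<Longrightarrow> j \<in> {1..N} \<Longrightarrow>
           measure M {\<omega> \<in> space M. (\<forall>k\<le>n. X k \<omega> = x k) \<and> X (Suc n) \<omega> = j}
         = measure M {\<omega> \<in> space M. \<forall>k\<le>n. X k \<omega> = x k} * vrrw_kernel N A \<alpha> x n j"
    and "I \<subseteq> {1..N}"
    and "0 < \<nu>" and "\<nu> < 1"
  shows "AE \<omega> in M.
           (\<forall>i\<in>I. (\<lambda>n. emp X n i \<omega> * real n powr \<nu>) \<longlonglongrightarrow> 0)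
           \<longrightarrow> finite {n. X n \<omega> \<in> I}"
proof -
  interpret V: vrrw N A \<alpha> M X
    by (intro vrrw.intro mat.intro vrrw_axioms.intro assms(1)) (rule assms; assumption)+
  define Zm where "Zm m = {\<omega> \<in> space M. (\<forall>n k. m \<le> k \<and> k \<le> n \<longrightarrow> (\<forall>i\<in>I. real (path_occ (\<lambda>k. X k \<omega>) k i) \<le> 2 * real k powr (1 - \<nu>)))
     \<and> (\<forall>k::nat. \<exists>n. real (Suc k) \<le> (\<Sum>i\<in>I. 1 + real (path_occ (\<lambda>k. X k \<omega>) n i)))}" for m
  have null: "Zm (Suc m) \<in> null_sets M" for m
  proof -
    interpret W: vrrwI N A \<alpha> M X I \<nu> "Suc m"
      by (intro vrrwI.intro vrrwI_axioms.intro V.vrrw_axioms) (use assms(11,12,13) in auto)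
    show ?thesis unfolding Zm_def by (rule W.null_final)
  qed
  have finI: "finite I" using assms(11) finite_subset by blast
  show ?thesis
  proof (rule AE_I'[of "\<Union>m. Zm (Suc m)"])
    show "(\<Union>m. Zm (Suc m)) \<in> null_sets M" using null by blast
  next
    show "{\<omega> \<in> space M. \<not> ((\<forall>i\<in>I. (\<lambda>n. emp X n i \<omega> * real n powr \<nu>) \<longlonglongrightarrow> 0) \<longrightarrow> finite {n. X n \<omega> \<in> I})}
        \<subseteq> (\<Union>m. Zm (Suc m))"
    proof
      fix \<omega> assume "\<omega> \<in> {\<omega> \<in> space M. \<not> ((\<forall>i\<in>I. (\<lambda>n. emp X n i \<omega> * real n powr \<nu>) \<longlonglongrightarrow> 0) \<longrightarrow> finite {n. X n \<omega> \<in> I})}"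
      then have w: "\<omega> \<in> space M" and conv: "\<forall>i\<in>I. (\<lambda>n. emp X n i \<omega> * real n powr \<nu>) \<longlonglongrightarrow> 0"
        and inf: "infinite {n. X n \<omega> \<in> I}" by auto
      have po: "path_occ (\<lambda>k. X k \<omega>) n i = occ X n i \<omega>" for n i
        unfolding path_occ_def occ_def by simp
      have "\<forall>i\<in>I. eventually (\<lambda>n. emp X n i \<omega> * real n powr \<nu> < 1) sequentially"
        using conv order_tendstoD(2)[OF _ zero_less_one] by blast
      then have "eventually (\<lambda>n. \<forall>i\<in>I. emp X n i \<omega> * real n powr \<nu> < 1) sequentially"
        by (rule eventually_ball_finite[OF finI])
      then obtain m0 where m0: "\<And>n i. n \<ge> m0 \<Longrightarrow> i \<in> I \<Longrightarrow> emp X n i \<omega> * real n powr \<nu> < 1"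
        unfolding eventually_sequentially by blast
      have part1: "\<forall>n k. Suc m0 \<le> k \<and> k \<le> n \<longrightarrow> (\<forall>i\<in>I. real (path_occ (\<lambda>k. X k \<omega>) k i) \<le> 2 * real k powr (1 - \<nu>))"
      proof (intro allI impI ballI)
        fix n k i assume k: "Suc m0 \<le> k \<and> k \<le> n" and i: "i \<in> I"
        have lt: "real (occ X k i \<omega>) / real (k + 1) * real k powr \<nu> < 1"
          using m0[of k i] k i unfolding emp_def by auto
        have kpos: "real k > 0" using k by auto
        have "real (occ X k i \<omega>) * real k powr \<nu> < real k + 1"
          using lt by (simp add: field_simps)
        also have "\<dots> \<le> 2 * real k" using kpos k by simp
        finally have "real (occ X k i \<omega>) < 2 * real k / real k powr \<nu>"
          using kpos by (simp add: field_simps)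
        also have "2 * real k / real k powr \<nu> = 2 * real k powr (1 - \<nu>)"
          using kpos by (simp add: powr_diff)
        finally show "real (path_occ (\<lambda>k. X k \<omega>) k i) \<le> 2 * real k powr (1 - \<nu>)"
          unfolding po by simp
      qed
      have "{n. X n \<omega> \<in> I} = (\<Union>i\<in>I. {n. X n \<omega> = i})" by auto
      with inf finI obtain i where i: "i \<in> I" "infinite {n. X n \<omega> = i}" by auto
      have part2: "\<forall>k::nat. \<exists>n. real (Suc k) \<le> (\<Sum>i\<in>I. 1 + real (path_occ (\<lambda>k. X k \<omega>) n i))"
      proof
        fix k :: nat
        obtain B where B: "finite B" "card B = Suc k" "B \<subseteq> {n. X n \<omega> = i}"
          using infinite_arbitrarily_large[OF i(2)] by blast
        have Bne: "B \<noteq> {}" using B by auto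
        define n where "n = Max B"
        have "B \<subseteq> {l. l \<le> n \<and> X l \<omega> = i}" using B Bne unfolding n_def by auto
        then have "card B \<le> path_occ (\<lambda>k. X k \<omega>) n i" unfolding path_occ_def
          by (intro card_mono) auto
        then have "real (Suc k) \<le> 1 + real (path_occ (\<lambda>k. X k \<omega>) n i)" using B by simp
        also have "\<dots> \<le> (\<Sum>i\<in>I. 1 + real (path_occ (\<lambda>k. X k \<omega>) n i))"
          using finI i by (intro member_le_sum) auto
        finally show "\<exists>n. real (Suc k) \<le> (\<Sum>i\<in>I. 1 + real (path_occ (\<lambda>k. X k \<omega>) n i))" by blast
      qed
      have "\<omega> \<in> Zm (Suc m0)" unfolding Zm_def using w part1 part2 by blast
      then show "\<omega> \<in> (\<Union>m. Zm (Suc m))" by blast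
    qed
  qed
qed


end
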